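(* Let $r\ge 1$ be such that $2r+1=t^2$ for an (odd) integer $t$. In $\mathcal{C}(B_r)$, let $V:=X_{2\lambda_1}$ and $W_i:=X_{\gamma^{it}}$ for $1\le i\le (t-1)/2$. Then the full fusion subcategory $\mathcal{D}(B_r)$ of $\mathcal{C}(B_r)$ generated by $\mathbf{1}, V, W_1,\dots,W_{(t-1)/2}$ has exactly these objects as its simple objects (up to isomorphism), i.e. their additive span is closed under tensor product, and $\mathcal{D}(B_r)$ is symmetric.
   Context: $\mathcal{C}(B_r)$ denotes the unitary modular (ribbon fusion) category $\mathcal{C}(\mathfrak{so}_{2r+1},q,\ell)$ associated with the quantum group of $\mathfrak{so}_{2r+1}$ at $\ell=4r+2$, $q=e^{\pi i/\ell}$ (equivalently the level-2 category $SO(2r+1)_2$). With fundamental weights $\lambda_1=(1,0,\dots,0),\dots,\lambda_{r-1}=(1,\dots,1,0)$, $\lambda_r=\tfrac12(1,\dots,1)$, its simple objects are labeled by $\mathbf{0},2\lambda_1,\gamma^1,\dots,\gamma^r,\varepsilon,\varepsilon'$ where $\gamma^i=\lambda_i$ for $1\le i\le r-1$, $\gamma^r=2\lambda_r$, $\varepsilon=\lambda_r$, $\varepsilon'=\lambda_1+\lambda_r$; the simple objects $X_{\mathbf 0}=\mathbf{1}$ and $X_{2\lambda_1}$ have dimension 1, the $X_{\gamma^i}$ have dimension 2, and $X_\varepsilon,X_{\varepsilon'}$ have dimension $\sqrt{2r+1}$; all simple objects are self-dual. The normalized $S$-matrix $\tilde s$ (with $\tilde s_{\mathbf 0,\mathbf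 0}=1$) satisfies $\tilde s(2\lambda_1,2\lambda_1)=1$, $\tilde s(2\lambda_1,\gamma^i)=2$, $\tilde s(2\lambda_1,\varepsilon)=\tilde s(2\lambda_1,\varepsilon')=-\sqrt{2r+1}$, $\tilde s(\gamma^i,\gamma^j)=4\cos(2ij\pi/(2r+1))$, $\tilde s(\gamma^i,\varepsilon)=\tilde s(\gamma^i,\varepsilon')=0$. The twists are $\theta_\lambda=q^{\langle\lambda+2\rho,\lambda\rangle}$ (normalized so short roots have squared length 2). A braided fusion subcategory $\mathcal{D}$ is symmetric if $c_{Y,X}c_{X,Y}=\mathrm{Id}_{X\otimes Y}$ for all $X,Y\in\mathcal{D}$, equivalently $\tilde s_{X,Y}=\dim(X)\dim(Y)$ for all simple $X,Y$ in $\mathcal{D}$. *)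

theory Defs
  imports Complex_Main "HOL-Library.Multiset"
begin

text \<open>Combinatorial data (labels of simple objects, fusion rules, dimensions and
normalized S-matrix) of the modular category C(B_r) = SO(2r+1)_2.
Labels: Zero = 0, TwoL1 = 2 lambda_1, Gam i = gamma^i (1 <= i <= r),
Eps = epsilon, Eps' = epsilon'.\<close>

datatype lab = Zero | TwoL1 | Gam nat | Eps | Eps'

definition labels :: "nat \<Rightarrow> lab set" where
  "labels r = {Zero, TwoL1, Eps, Eps'} \<union> {Gam i | i. 1 \<le> i \<and> i \<le> r}"

text \<open>gamma^k for arbitrary k, with the usual identifications:
gamma^k = gamma^(2r+1-k), and gamma^0 stands for 1 + X_{2 lambda_1}.\<close>
definition gamf :: "nat \<Rightarrow> nat \<Rightarrow> lab multiset" where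
  "gamf r k = (let m = k mod (2*r+1) in
     if m = 0 then {#Zero, TwoL1#} else {# Gam (min m (2*r+1-m)) #})"

definition gams :: "nat \<Rightarrow> lab multiset" where
  "gams r = mset (map Gam [1..<r+1])"

text \<open>Fusion rules: fus r a b is the multiset of simple constituents of X_a \<otimes> X_b.\<close>
fun fus :: "nat \<Rightarrow> lab \<Rightarrow> lab \<Rightarrow> lab multiset" where
  "fus r Zero b = {#b#}"
| "fus r a Zero = {#a#}"
| "fus r TwoL1 TwoL1 = {#Zero#}"
| "fus r TwoL1 (Gam i) = {#Gam i#}"
| "fus r (Gam i) TwoL1 = {#Gam i#}"
| "fus r TwoL1 Eps = {#Eps'#}"
| "fus r Eps TwoL1 = {#Eps'#}"
| "fus r TwoL1 Eps' = {#Eps#}"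
| "fus r Eps' TwoL1 = {#Eps#}"
| "fus r (Gam i) (Gam j) = gamf r (i + j) + gamf r (if j \<le> i then i - j else j - i)"
| "fus r (Gam i) Eps = {#Eps, Eps'#}"
| "fus r (Gam i) Eps' = {#Eps, Eps'#}"
| "fus r Eps (Gam i) = {#Eps, Eps'#}"
| "fus r Eps' (Gam i) = {#Eps, Eps'#}"
| "fus r Eps Eps = {#Zero#} + gams r"
| "fus r Eps' Eps' = {#Zero#} + gams r"
| "fus r Eps Eps' = {#TwoL1#} + gams r"
| "fus r Eps' Eps = {#TwoL1#} + gams r"

fun fdim :: "nat \<Rightarrow> lab \<Rightarrow> real" where
  "fdim r Zero = 1"
| "fdim r TwoL1 = 1"
| "fdim r (Gam i) = 2"
| "fdim r Eps = sqrt (2*r+1)"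
| "fdim r Eps' = sqrt (2*r+1)"

text \<open>Normalized S-matrix, with the entries given in the paper; the entries
s(eps,eps), s(eps,eps'), s(eps',eps') are not needed and left unspecified.\<close>
fun st :: "nat \<Rightarrow> lab \<Rightarrow> lab \<Rightarrow> real" where
  "st r Zero b = fdim r b"
| "st r a Zero = fdim r a"
| "st r TwoL1 TwoL1 = 1"
| "st r TwoL1 (Gam i) = 2"
| "st r (Gam i) TwoL1 = 2"
| "st r TwoL1 Eps = - sqrt (2*r+1)"
| "st r Eps TwoL1 = - sqrt (2*r+1)"
| "st r TwoL1 Eps' = - sqrt (2*r+1)"
| "st r Eps' TwoL1 = - sqrt (2*r+1)"
| "st r (Gam i) (Gam j) = 4 * cos (2 * real i * real j * pi / (2*r+1))"
| "st r (Gam i) Eps = 0"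
| "st r (Gam i) Eps' = 0"
| "st r Eps (Gam i) = 0"
| "st r Eps' (Gam i) = 0"
| "st r a b = undefined (r, a, b)"

text \<open>Simple objects of the full fusion subcategory generated by the simple objects in G:
the smallest set of labels containing G and closed under taking simple constituents of
tensor products (all simples are self-dual, so closure under duals is automatic).\<close>
inductive_set gen :: "nat \<Rightarrow> lab set \<Rightarrow> lab set" for r G where
  base: "a \<in> G \<Longrightarrow> a \<in> gen r G"
| unit: "Zero \<in> gen r G"
| tens: "a \<in> gen r G \<Longrightarrow> b \<in> gen r G \<Longrightarrow> c \<in># fus r a b \<Longrightarrow> c \<in> gen r G"

text \<open>Symmetric: double braiding trivial, i.e. s(X,Y) = dim X dim Y for all simples.\<close>
definition symmetric_sub :: "nat \<Rightarrow> lab set \<Rightarrow> bool" where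
  "symmetric_sub r S \<longleftrightarrow> (\<forall>a\<in>S. \<forall>b\<in>S. st r a b = fdim r a * fdim r b)"

end

theory Submission
  imports Defs
begin

lemma gamf_in:
  fixes r t h k :: nat
  assumes t: "t = 2*h+1" and r: "2*r+1 = t^2" and k: "k \<le> 2*h"
  shows "set_mset (gamf r (k*t)) \<subseteq> {Zero, TwoL1} \<union> {Gam (i * t) | i. 1 \<le> i \<and> i \<le> h}"
proof -
  have "k*t \<le> 2*h*t" using k by simp
  also have "2*h*t < t*t" using t by simp
  finally have lt: "k*t < 2*r+1" using r by (simp add: power2_eq_square)
  hence m: "k*t mod (2*r+1) = k*t" by simp
  show ?thesis
  proof (cases "k = 0")
    case True thus ?thesis by (simp add: gamf_def)
  next
    case False
    show ?thesis
    proof (cases "k \<le> h")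
      case True
      have "2*k*t \<le> 2*h*t" using True by simp
      also have "\<dots> \<le> t*t" using t by simp
      finally have "2*(k*t) \<le> 2*r+1" using r by (simp add: power2_eq_square)
      hence "min (k*t) (2*r+1-k*t) = k*t" by simp
      thus ?thesis using m False True by (auto simp: gamf_def Let_def)
    next
      case nh: False
      have "2*r+1-k*t = (t-k)*t" using r by (simp add: power2_eq_square diff_mult_distrib)
      moreover have "t-k \<le> k" using nh t by simp
      hence "(t-k)*t \<le> k*t" by (rule mult_right_mono) simp
      ultimately have "min (k*t) (2*r+1-k*t) = (t-k)*t" by simp
      moreover have "1 \<le> t-k" "t-k \<le> h" using nh t k by auto
      ultimately show ?thesis using m False by (auto simp: gamf_def Let_def)
    qed
  qed
qed

theorem lemma3p2:
  fixes r t :: nat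
  assumes "r \<ge> 1" and "2 * r + 1 = t ^ 2"
  defines "D \<equiv> {Zero, TwoL1} \<union> {Gam (i * t) | i. 1 \<le> i \<and> i \<le> (t - 1) div 2}"
  shows "D \<subseteq> labels r \<and> gen r D = D
         \<and> (\<forall>a\<in>D. \<forall>b\<in>D. set_mset (fus r a b) \<subseteq> D)
         \<and> symmetric_sub r D"
proof -
  have "odd (t^2)" by (simp add: assms(2)[symmetric])
  hence "odd t" by simp
  then obtain h where t: "t = 2*h+1" by (metis oddE)
  have hd: "(t-1) div 2 = h" using t by simp
  have D: "D = {Zero, TwoL1} \<union> {Gam (i * t) | i. 1 \<le> i \<and> i \<le> h}" using D_def hd by simp
  have rr: "2*r+1 = t*t" using assms(2) by (simp add: power2_eq_square)
  have sub: "D \<subseteq> labels r"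
  proof
    fix a assume "a \<in> D"
    then consider "a = Zero" | "a = TwoL1" | i where "a = Gam (i*t)" "1 \<le> i" "i \<le> h"
      using D by blast
    thus "a \<in> labels r"
    proof cases
      case 3
      have "i*t \<le> h*t" using 3 by simp
      also have "2*(h*t) \<le> 2*r" using rr t by (simp add: algebra_simps)
      hence "h*t \<le> r" by simp
      finally have "i*t \<le> r" .
      moreover have "1 \<le> i*t" using 3 t by simp
      ultimately show ?thesis using 3 by (auto simp: labels_def)
    qed (auto simp: labels_def)
  qed
  have clos: "\<forall>a\<in>D. \<forall>b\<in>D. set_mset (fus r a b) \<subseteq> D"
  proof (intro ballI)
    fix a b assume a: "a \<in> D" and b: "b \<in> D"
    show "set_mset (fus r a b) \<subseteq> D"
    proof (cases "\<exists>i j. a = Gam (i*t) \<and> b = Gam (j*t) \<and> 1 \<le> i \<and> i \<le> h \<and> 1 \<le> j \<and> j \<le> h")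
      case True
      then obtain i j where ij: "a = Gam (i*t)" "b = Gam (j*t)" "1 \<le> i" "i \<le> h" "1 \<le> j" "j \<le> h"
        by blast
      have e1: "i*t + j*t = (i+j)*t" by (simp add: algebra_simps)
      have e2: "(if j*t \<le> i*t then i*t - j*t else j*t - i*t) = (if j \<le> i then i - j else j - i)*t"
      proof -
        have tp: "0 < t" using t by simp
        show ?thesis using tp by (auto simp: diff_mult_distrib)
      qed
      have g1: "set_mset (gamf r ((i+j)*t)) \<subseteq> D"
        using gamf_in[OF t assms(2), of "i+j"] ij D by simp
      have g2: "set_mset (gamf r ((if j \<le> i then i - j else j - i)*t)) \<subseteq> D"
      proof -
        have "(if j \<le> i then i - j else j - i) \<le> 2*h" using ij by auto
        from gamf_in[OF t assms(2) this] show ?thesis using D by simp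
      qed
      show ?thesis using ij g1 g2 e1 e2 by simp
    next
      case False
      then consider "a = Zero" | "b = Zero" | "a = TwoL1 \<and> b = TwoL1"
        | i where "a = TwoL1" "b = Gam (i*t)" "1 \<le> i" "i \<le> h"
        | i where "b = TwoL1" "a = Gam (i*t)" "1 \<le> i" "i \<le> h"
        using a b D by blast
      thus ?thesis
      proof cases
        case 1 thus ?thesis using b by simp
      next
        case 2 thus ?thesis using a by (cases a) auto
      qed (use D in auto)
    qed
  qed
  have gen: "gen r D = D"
  proof
    show "gen r D \<subseteq> D"
    proof
      fix x assume "x \<in> gen r D"
      thus "x \<in> D"
      proof (induction rule: gen.induct)
        case (base a) thus ?case .
      next
        case unit thus ?case using D by simp
      next
        case (tens a b c) thus ?case using clos by blast
      qed
    qed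
  next
    show "D \<subseteq> gen r D" by (auto intro: gen.base)
  qed
  have cosl: "st r (Gam (i*t)) (Gam (j*t)) = 4" for i j
  proof -
    have "real (2*r+1) = real t * real t" using rr by (metis of_nat_mult)
    hence "(2 * real r + 1) = real t * real t" by simp
    moreover have "t > 0" using t by simp
    ultimately have "2 * real (i*t) * real (j*t) * pi / (2 * real r + 1) = 2 * real (i*j) * pi"
      by (simp add: field_simps)
    hence "cos (2 * real (i*t) * real (j*t) * pi / (2 * real r + 1)) = 1"
      by (metis cos_2npi)
    moreover have "real (2*r+1) = 2 * real r + 1" by simp
    ultimately show ?thesis by (simp only: st.simps)
  qed
  have sym: "symmetric_sub r D"
    unfolding symmetric_sub_def
  proof (intro ballI)
    fix a b assume a: "a \<in> D" and b: "b \<in> D"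
    show "st r a b = fdim r a * fdim r b"
      using a b D cosl by auto
  qed
  show ?thesis using sub gen clos sym by blast
qed

end
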